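(* Let $\mathfrak{g}$ be any Lie algebra whose bracket, in a basis $\{X_0,\dots,X_7\}$, is given by the family $F_8$ below with $a_1=0$ (i.e. $\mathfrak{g}\in Fil_8(1)$). Then $\mathfrak{g}$ is not rigid in $\mathcal{F}il_8$, not rigid in $\mathcal{N}il_8$, and not rigid in $\mathcal{L}ie_8$; i.e. its $GL(8,\mathbb{K})$-orbit is not Zariski open in any of these three varieties.
   Context: $\mathbb{K}$ is algebraically closed of characteristic $0$. $\mathcal{L}ie_8$ is the affine algebraic variety of all Lie brackets on $\mathbb{K}^8$ (tuples of structure constants $C_{ij}^k$ satisfying skew-symmetry and the Jacobi identity), with $GL(8,\mathbb{K})$ acting by change of basis; $\mathcal{N}il_8\subset\mathcal{L}ie_8$ is the subvariety of nilpotent brackets and $\mathcal{F}il_8$ the (Zariski open in $\mathcal{N}il_8$) subset of filiform brackets (nilpotent of nilindex $7$). A Lie bracket is rigid in a $GL$-stable subset $S$ if its orbit is Zariski open in $S$. The family $F_8$ (parameters $a_1,a_2,a_4,a_5,a_6,a_7,a_8\in\mathbb{K}$ with $a_1(5a_4+2a_2)=0$): $\mu(X_0,X_i)=X_{i+1}$ ($1\le i\le 6$), $\mu(X_2,X_5)=a_1X_7$, $\mu(X_1,X_5)=a_1X_6+a_2X_7$, $\mu(X_3,X_4)=-a_1X_7$, $\mu(X_2,X_4)=a_4X_7$, $\mu(X_1,X_4)=a_1X_5+(a_2+a_4)X_6+a_5X_7$, $\mu(X_2,X_3)=a_4X_6+a_6X_7$, $\mu(X_1,X_3)=a_1X_4+(a_2+2a_4)X_5+(a_5+a_6)X_6+a_7X_7$,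 $\mu(X_1,X_2)=a_1X_3+(a_2+2a_4)X_4+(a_5+a_6)X_5+a_7X_6+a_8X_7$, all other brackets $\mu(X_i,X_j)$, $i<j$, being zero. Every 8-dimensional filiform Lie algebra is isomorphic to a member of $F_8$. $Fil_8(1)$ denotes the members with $a_1=0$, $Fil_8(2)$ those with $5a_4+2a_2=0$, and $\mathcal{F}il_8(k)$ the union of $GL(8,\mathbb{K})$-orbits of $Fil_8(k)$. *)

theory Defs
  imports "HOL-Computational_Algebra.Polynomial"
begin

definition alg_closed :: "'a::field itself \<Rightarrow> bool" where
  "alg_closed _ \<longleftrightarrow> (\<forall>p::'a poly. degree p \<ge> 1 \<longrightarrow> (\<exists>x. poly p x = 0))"

text \<open>Structure constants: C i j k = C_{ij}^k, i.e. mu(X_i,X_j) = sum_k C_{ij}^k X_k.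
  Points of the ambient affine space K^(n^3) are those vanishing outside indices < n.\<close>
type_synonym 'a sc = "nat \<Rightarrow> nat \<Rightarrow> nat \<Rightarrow> 'a"

definition in_ambient :: "nat \<Rightarrow> 'a::zero sc \<Rightarrow> bool" where
  "in_ambient n C \<longleftrightarrow> (\<forall>i j k. (n \<le> i \<or> n \<le> j \<or> n \<le> k) \<longrightarrow> C i j k = 0)"

definition is_lie :: "nat \<Rightarrow> 'a::comm_ring_1 sc \<Rightarrow> bool" where
  "is_lie n C \<longleftrightarrow> in_ambient n C
     \<and> (\<forall>i j k. C i j k = - C j i k) \<and> (\<forall>i k. C i i k = 0)
     \<and> (\<forall>i<n. \<forall>j<n. \<forall>l<n. \<forall>m<n.
          (\<Sum>s<n. C i j s * C s l m + C j l s * C s i m + C l i s * C s j m) = 0)"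

definition vecs :: "nat \<Rightarrow> (nat \<Rightarrow> 'a::zero) set" where
  "vecs n = {v. \<forall>i\<ge>n. v i = 0}"

definition br :: "nat \<Rightarrow> 'a::comm_ring_1 sc \<Rightarrow> (nat \<Rightarrow> 'a) \<Rightarrow> (nat \<Rightarrow> 'a) \<Rightarrow> nat \<Rightarrow> 'a" where
  "br n C x y = (\<lambda>k. \<Sum>i<n. \<Sum>j<n. x i * y j * C i j k)"

definition lspan :: "(nat \<Rightarrow> 'a::comm_ring_1) set \<Rightarrow> (nat \<Rightarrow> 'a) set" where
  "lspan S = {v. \<exists>(m::nat) c u. (\<forall>i<m. u i \<in> S) \<and> v = (\<lambda>k. \<Sum>i<m. c i * u i k)}"

text \<open>Lower central series: lcs n C 0 = g = C^1 g, lcs n C (Suc t) = [g, lcs n C t].\<close>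
fun lcs :: "nat \<Rightarrow> 'a::comm_ring_1 sc \<Rightarrow> nat \<Rightarrow> (nat \<Rightarrow> 'a) set" where
  "lcs n C 0 = vecs n"
| "lcs n C (Suc t) = lspan {br n C x y | x y. x \<in> vecs n \<and> y \<in> lcs n C t}"

definition nilpotent_br :: "nat \<Rightarrow> 'a::comm_ring_1 sc \<Rightarrow> bool" where
  "nilpotent_br n C \<longleftrightarrow> (\<exists>t. lcs n C t = {\<lambda>_. 0})"

text \<open>Filiform: nilpotent of nilindex n-1, i.e. C^{n-1} g \<noteq> 0 and C^n g = 0.\<close>
definition filiform_br :: "nat \<Rightarrow> 'a::comm_ring_1 sc \<Rightarrow> bool" where
  "filiform_br n C \<longleftrightarrow> lcs n C (n - 1) = {\<lambda>_. 0} \<and> lcs n C (n - 2) \<noteq> {\<lambda>_. 0}"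

definition Lie_var :: "nat \<Rightarrow> 'a::comm_ring_1 sc set" where
  "Lie_var n = {C. is_lie n C}"
definition Nil_var :: "nat \<Rightarrow> 'a::comm_ring_1 sc set" where
  "Nil_var n = {C. is_lie n C \<and> nilpotent_br n C}"
definition Fil_var :: "nat \<Rightarrow> 'a::comm_ring_1 sc set" where
  "Fil_var n = {C. is_lie n C \<and> filiform_br n C}"

text \<open>GL(n)-orbit: C' is obtained from C by a change of basis g (invertible n x n matrix),
  i.e. the linear map f(X_i) = sum_a g a i X_a satisfies f(mu(X_i,X_j)) = mu'(f X_i, f X_j).\<close>
definition invertible_mat :: "nat \<Rightarrow> (nat \<Rightarrow> nat \<Rightarrow> 'a::comm_ring_1) \<Rightarrow> bool" where
  "invertible_mat n g \<longleftrightarrow> (\<exists>h. \<forall>i<n. \<forall>j<n.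
      (\<Sum>l<n. g i l * h l j) = (if i = j then 1 else 0) \<and>
      (\<Sum>l<n. h i l * g l j) = (if i = j then 1 else 0))"

definition gl_orbit :: "nat \<Rightarrow> 'a::comm_ring_1 sc \<Rightarrow> 'a sc set" where
  "gl_orbit n C = {C'. in_ambient n C' \<and> (\<exists>g. invertible_mat n g \<and>
      (\<forall>i<n. \<forall>j<n. \<forall>k<n.
         (\<Sum>c<n. C i j c * g k c) = (\<Sum>a<n. \<Sum>b<n. g a i * g b j * C' a b k)))}"

inductive_set polyfun :: "('a::comm_ring_1 sc \<Rightarrow> 'a) set" where
  pf_const: "(\<lambda>_. c) \<in> polyfun"
| pf_coord: "(\<lambda>C. C i j k) \<in> polyfun"
| pf_add: "p \<in> polyfun \<Longrightarrow> q \<in> polyfun \<Longrightarrow> (\<lambda>C. p C + q C) \<in> polyfun"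
| pf_mult: "p \<in> polyfun \<Longrightarrow> q \<in> polyfun \<Longrightarrow> (\<lambda>C. p C * q C) \<in> polyfun"

definition zariski_open_in :: "'a::comm_ring_1 sc set \<Rightarrow> 'a sc set \<Rightarrow> bool" where
  "zariski_open_in S U \<longleftrightarrow> U \<subseteq> S \<and>
     (\<exists>P. P \<subseteq> polyfun \<and> U = S \<inter> {C. \<exists>p\<in>P. p C \<noteq> 0})"

definition rigid_in :: "nat \<Rightarrow> 'a::comm_ring_1 sc set \<Rightarrow> 'a sc \<Rightarrow> bool" where
  "rigid_in n S C \<longleftrightarrow> zariski_open_in S (gl_orbit n C)"

definition F8_up :: "'a::comm_ring_1 \<Rightarrow> 'a \<Rightarrow> 'a \<Rightarrow> 'a \<Rightarrow> 'a \<Rightarrow> 'a \<Rightarrow> 'a \<Rightarrow> nat \<Rightarrow> nat \<Rightarrow> nat \<Rightarrow> 'a" where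
  "F8_up a1 a2 a4 a5 a6 a7 a8 i j k =
    (if i = 0 \<and> 1 \<le> j \<and> j \<le> 6 \<and> k = j + 1 then 1
     else if (i, j, k) = (2, 5, 7) then a1
     else if (i, j, k) = (1, 5, 6) then a1
     else if (i, j, k) = (1, 5, 7) then a2
     else if (i, j, k) = (3, 4, 7) then - a1
     else if (i, j, k) = (2, 4, 7) then a4
     else if (i, j, k) = (1, 4, 5) then a1
     else if (i, j, k) = (1, 4, 6) then a2 + a4
     else if (i, j, k) = (1, 4, 7) then a5
     else if (i, j, k) = (2, 3, 6) then a4
     else if (i, j, k) = (2, 3, 7) then a6
     else if (i, j, k) = (1, 3, 4) then a1
     else if (i, j, k) = (1, 3, 5) then a2 + 2 * a4
     else if (i, j, k) = (1, 3, 6) then a5 + a6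
     else if (i, j, k) = (1, 3, 7) then a7
     else if (i, j, k) = (1, 2, 3) then a1
     else if (i, j, k) = (1, 2, 4) then a2 + 2 * a4
     else if (i, j, k) = (1, 2, 5) then a5 + a6
     else if (i, j, k) = (1, 2, 6) then a7
     else if (i, j, k) = (1, 2, 7) then a8
     else 0)"

definition F8 :: "'a::comm_ring_1 \<Rightarrow> 'a \<Rightarrow> 'a \<Rightarrow> 'a \<Rightarrow> 'a \<Rightarrow> 'a \<Rightarrow> 'a \<Rightarrow> 'a sc" where
  "F8 a1 a2 a4 a5 a6 a7 a8 i j k =
    (if i < j then F8_up a1 a2 a4 a5 a6 a7 a8 i j k
     else if j < i then - F8_up a1 a2 a4 a5 a6 a7 a8 j i k
     else 0)"

end

theory Submission
  imports Defs
begin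

lemma F8tab:
  fixes b2 b4 b5 b6 b7 b8 :: "'a::comm_ring_1"
  shows "F8 0 b2 b4 b5 b6 b7 b8 0 0 0 = 0"
    and "F8 0 b2 b4 b5 b6 b7 b8 0 0 1 = 0"
    and "F8 0 b2 b4 b5 b6 b7 b8 0 0 2 = 0"
    and "F8 0 b2 b4 b5 b6 b7 b8 0 0 3 = 0"
    and "F8 0 b2 b4 b5 b6 b7 b8 0 0 4 = 0"
    and "F8 0 b2 b4 b5 b6 b7 b8 0 0 5 = 0"
    and "F8 0 b2 b4 b5 b6 b7 b8 0 0 6 = 0"
    and "F8 0 b2 b4 b5 b6 b7 b8 0 0 7 = 0"
    and "F8 0 b2 b4 b5 b6 b7 b8 0 1 0 = 0"
    and "F8 0 b2 b4 b5 b6 b7 b8 0 1 1 = 0"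
    and "F8 0 b2 b4 b5 b6 b7 b8 0 1 2 = 1"
    and "F8 0 b2 b4 b5 b6 b7 b8 0 1 3 = 0"
    and "F8 0 b2 b4 b5 b6 b7 b8 0 1 4 = 0"
    and "F8 0 b2 b4 b5 b6 b7 b8 0 1 5 = 0"
    and "F8 0 b2 b4 b5 b6 b7 b8 0 1 6 = 0"
    and "F8 0 b2 b4 b5 b6 b7 b8 0 1 7 = 0"
    and "F8 0 b2 b4 b5 b6 b7 b8 0 2 0 = 0"
    and "F8 0 b2 b4 b5 b6 b7 b8 0 2 1 = 0"
    and "F8 0 b2 b4 b5 b6 b7 b8 0 2 2 = 0"
    and "F8 0 b2 b4 b5 b6 b7 b8 0 2 3 = 1"
    and "F8 0 b2 b4 b5 b6 b7 b8 0 2 4 = 0"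
    and "F8 0 b2 b4 b5 b6 b7 b8 0 2 5 = 0"
    and "F8 0 b2 b4 b5 b6 b7 b8 0 2 6 = 0"
    and "F8 0 b2 b4 b5 b6 b7 b8 0 2 7 = 0"
    and "F8 0 b2 b4 b5 b6 b7 b8 0 3 0 = 0"
    and "F8 0 b2 b4 b5 b6 b7 b8 0 3 1 = 0"
    and "F8 0 b2 b4 b5 b6 b7 b8 0 3 2 = 0"
    and "F8 0 b2 b4 b5 b6 b7 b8 0 3 3 = 0"
    and "F8 0 b2 b4 b5 b6 b7 b8 0 3 4 = 1"
    and "F8 0 b2 b4 b5 b6 b7 b8 0 3 5 = 0"
    and "F8 0 b2 b4 b5 b6 b7 b8 0 3 6 = 0"
    and "F8 0 b2 b4 b5 b6 b7 b8 0 3 7 = 0"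
    and "F8 0 b2 b4 b5 b6 b7 b8 0 4 0 = 0"
    and "F8 0 b2 b4 b5 b6 b7 b8 0 4 1 = 0"
    and "F8 0 b2 b4 b5 b6 b7 b8 0 4 2 = 0"
    and "F8 0 b2 b4 b5 b6 b7 b8 0 4 3 = 0"
    and "F8 0 b2 b4 b5 b6 b7 b8 0 4 4 = 0"
    and "F8 0 b2 b4 b5 b6 b7 b8 0 4 5 = 1"
    and "F8 0 b2 b4 b5 b6 b7 b8 0 4 6 = 0"
    and "F8 0 b2 b4 b5 b6 b7 b8 0 4 7 = 0"
    and "F8 0 b2 b4 b5 b6 b7 b8 0 5 0 = 0"
    and "F8 0 b2 b4 b5 b6 b7 b8 0 5 1 = 0"
    and "F8 0 b2 b4 b5 b6 b7 b8 0 5 2 = 0"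
    and "F8 0 b2 b4 b5 b6 b7 b8 0 5 3 = 0"
    and "F8 0 b2 b4 b5 b6 b7 b8 0 5 4 = 0"
    and "F8 0 b2 b4 b5 b6 b7 b8 0 5 5 = 0"
    and "F8 0 b2 b4 b5 b6 b7 b8 0 5 6 = 1"
    and "F8 0 b2 b4 b5 b6 b7 b8 0 5 7 = 0"
    and "F8 0 b2 b4 b5 b6 b7 b8 0 6 0 = 0"
    and "F8 0 b2 b4 b5 b6 b7 b8 0 6 1 = 0"
    and "F8 0 b2 b4 b5 b6 b7 b8 0 6 2 = 0"
    and "F8 0 b2 b4 b5 b6 b7 b8 0 6 3 = 0"
    and "F8 0 b2 b4 b5 b6 b7 b8 0 6 4 = 0"
    and "F8 0 b2 b4 b5 b6 b7 b8 0 6 5 = 0"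
    and "F8 0 b2 b4 b5 b6 b7 b8 0 6 6 = 0"
    and "F8 0 b2 b4 b5 b6 b7 b8 0 6 7 = 1"
    and "F8 0 b2 b4 b5 b6 b7 b8 0 7 0 = 0"
    and "F8 0 b2 b4 b5 b6 b7 b8 0 7 1 = 0"
    and "F8 0 b2 b4 b5 b6 b7 b8 0 7 2 = 0"
    and "F8 0 b2 b4 b5 b6 b7 b8 0 7 3 = 0"
    and "F8 0 b2 b4 b5 b6 b7 b8 0 7 4 = 0"
    and "F8 0 b2 b4 b5 b6 b7 b8 0 7 5 = 0"
    and "F8 0 b2 b4 b5 b6 b7 b8 0 7 6 = 0"
    and "F8 0 b2 b4 b5 b6 b7 b8 0 7 7 = 0"
    and "F8 0 b2 b4 b5 b6 b7 b8 1 0 0 = 0"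
    and "F8 0 b2 b4 b5 b6 b7 b8 1 0 1 = 0"
    and "F8 0 b2 b4 b5 b6 b7 b8 1 0 2 = - 1"
    and "F8 0 b2 b4 b5 b6 b7 b8 1 0 3 = 0"
    and "F8 0 b2 b4 b5 b6 b7 b8 1 0 4 = 0"
    and "F8 0 b2 b4 b5 b6 b7 b8 1 0 5 = 0"
    and "F8 0 b2 b4 b5 b6 b7 b8 1 0 6 = 0"
    and "F8 0 b2 b4 b5 b6 b7 b8 1 0 7 = 0"
    and "F8 0 b2 b4 b5 b6 b7 b8 1 1 0 = 0"
    and "F8 0 b2 b4 b5 b6 b7 b8 1 1 1 = 0"
    and "F8 0 b2 b4 b5 b6 b7 b8 1 1 2 = 0"
    and "F8 0 b2 b4 b5 b6 b7 b8 1 1 3 = 0"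
    and "F8 0 b2 b4 b5 b6 b7 b8 1 1 4 = 0"
    and "F8 0 b2 b4 b5 b6 b7 b8 1 1 5 = 0"
    and "F8 0 b2 b4 b5 b6 b7 b8 1 1 6 = 0"
    and "F8 0 b2 b4 b5 b6 b7 b8 1 1 7 = 0"
    and "F8 0 b2 b4 b5 b6 b7 b8 1 2 0 = 0"
    and "F8 0 b2 b4 b5 b6 b7 b8 1 2 1 = 0"
    and "F8 0 b2 b4 b5 b6 b7 b8 1 2 2 = 0"
    and "F8 0 b2 b4 b5 b6 b7 b8 1 2 3 = 0"
    and "F8 0 b2 b4 b5 b6 b7 b8 1 2 4 = b2 + 2 * b4"
    and "F8 0 b2 b4 b5 b6 b7 b8 1 2 5 = b5 + b6"
    and "F8 0 b2 b4 b5 b6 b7 b8 1 2 6 = b7"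
    and "F8 0 b2 b4 b5 b6 b7 b8 1 2 7 = b8"
    and "F8 0 b2 b4 b5 b6 b7 b8 1 3 0 = 0"
    and "F8 0 b2 b4 b5 b6 b7 b8 1 3 1 = 0"
    and "F8 0 b2 b4 b5 b6 b7 b8 1 3 2 = 0"
    and "F8 0 b2 b4 b5 b6 b7 b8 1 3 3 = 0"
    and "F8 0 b2 b4 b5 b6 b7 b8 1 3 4 = 0"
    and "F8 0 b2 b4 b5 b6 b7 b8 1 3 5 = b2 + 2 * b4"
    and "F8 0 b2 b4 b5 b6 b7 b8 1 3 6 = b5 + b6"
    and "F8 0 b2 b4 b5 b6 b7 b8 1 3 7 = b7"
    and "F8 0 b2 b4 b5 b6 b7 b8 1 4 0 = 0"
    and "F8 0 b2 b4 b5 b6 b7 b8 1 4 1 = 0"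
    and "F8 0 b2 b4 b5 b6 b7 b8 1 4 2 = 0"
    and "F8 0 b2 b4 b5 b6 b7 b8 1 4 3 = 0"
    and "F8 0 b2 b4 b5 b6 b7 b8 1 4 4 = 0"
    and "F8 0 b2 b4 b5 b6 b7 b8 1 4 5 = 0"
    and "F8 0 b2 b4 b5 b6 b7 b8 1 4 6 = b2 + b4"
    and "F8 0 b2 b4 b5 b6 b7 b8 1 4 7 = b5"
    and "F8 0 b2 b4 b5 b6 b7 b8 1 5 0 = 0"
    and "F8 0 b2 b4 b5 b6 b7 b8 1 5 1 = 0"
    and "F8 0 b2 b4 b5 b6 b7 b8 1 5 2 = 0"
    and "F8 0 b2 b4 b5 b6 b7 b8 1 5 3 = 0"
    and "F8 0 b2 b4 b5 b6 b7 b8 1 5 4 = 0"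
    and "F8 0 b2 b4 b5 b6 b7 b8 1 5 5 = 0"
    and "F8 0 b2 b4 b5 b6 b7 b8 1 5 6 = 0"
    and "F8 0 b2 b4 b5 b6 b7 b8 1 5 7 = b2"
    and "F8 0 b2 b4 b5 b6 b7 b8 1 6 0 = 0"
    and "F8 0 b2 b4 b5 b6 b7 b8 1 6 1 = 0"
    and "F8 0 b2 b4 b5 b6 b7 b8 1 6 2 = 0"
    and "F8 0 b2 b4 b5 b6 b7 b8 1 6 3 = 0"
    and "F8 0 b2 b4 b5 b6 b7 b8 1 6 4 = 0"
    and "F8 0 b2 b4 b5 b6 b7 b8 1 6 5 = 0"
    and "F8 0 b2 b4 b5 b6 b7 b8 1 6 6 = 0"
    and "F8 0 b2 b4 b5 b6 b7 b8 1 6 7 = 0"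
    and "F8 0 b2 b4 b5 b6 b7 b8 1 7 0 = 0"
    and "F8 0 b2 b4 b5 b6 b7 b8 1 7 1 = 0"
    and "F8 0 b2 b4 b5 b6 b7 b8 1 7 2 = 0"
    and "F8 0 b2 b4 b5 b6 b7 b8 1 7 3 = 0"
    and "F8 0 b2 b4 b5 b6 b7 b8 1 7 4 = 0"
    and "F8 0 b2 b4 b5 b6 b7 b8 1 7 5 = 0"
    and "F8 0 b2 b4 b5 b6 b7 b8 1 7 6 = 0"
    and "F8 0 b2 b4 b5 b6 b7 b8 1 7 7 = 0"
    and "F8 0 b2 b4 b5 b6 b7 b8 2 0 0 = 0"
    and "F8 0 b2 b4 b5 b6 b7 b8 2 0 1 = 0"
    and "F8 0 b2 b4 b5 b6 b7 b8 2 0 2 = 0"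
    and "F8 0 b2 b4 b5 b6 b7 b8 2 0 3 = - 1"
    and "F8 0 b2 b4 b5 b6 b7 b8 2 0 4 = 0"
    and "F8 0 b2 b4 b5 b6 b7 b8 2 0 5 = 0"
    and "F8 0 b2 b4 b5 b6 b7 b8 2 0 6 = 0"
    and "F8 0 b2 b4 b5 b6 b7 b8 2 0 7 = 0"
    and "F8 0 b2 b4 b5 b6 b7 b8 2 1 0 = 0"
    and "F8 0 b2 b4 b5 b6 b7 b8 2 1 1 = 0"
    and "F8 0 b2 b4 b5 b6 b7 b8 2 1 2 = 0"
    and "F8 0 b2 b4 b5 b6 b7 b8 2 1 3 = 0"
    and "F8 0 b2 b4 b5 b6 b7 b8 2 1 4 = - (b2 + 2 * b4)"
    and "F8 0 b2 b4 b5 b6 b7 b8 2 1 5 = - (b5 + b6)"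
    and "F8 0 b2 b4 b5 b6 b7 b8 2 1 6 = - (b7)"
    and "F8 0 b2 b4 b5 b6 b7 b8 2 1 7 = - (b8)"
    and "F8 0 b2 b4 b5 b6 b7 b8 2 2 0 = 0"
    and "F8 0 b2 b4 b5 b6 b7 b8 2 2 1 = 0"
    and "F8 0 b2 b4 b5 b6 b7 b8 2 2 2 = 0"
    and "F8 0 b2 b4 b5 b6 b7 b8 2 2 3 = 0"
    and "F8 0 b2 b4 b5 b6 b7 b8 2 2 4 = 0"
    and "F8 0 b2 b4 b5 b6 b7 b8 2 2 5 = 0"
    and "F8 0 b2 b4 b5 b6 b7 b8 2 2 6 = 0"
    and "F8 0 b2 b4 b5 b6 b7 b8 2 2 7 = 0"
    and "F8 0 b2 b4 b5 b6 b7 b8 2 3 0 = 0"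
    and "F8 0 b2 b4 b5 b6 b7 b8 2 3 1 = 0"
    and "F8 0 b2 b4 b5 b6 b7 b8 2 3 2 = 0"
    and "F8 0 b2 b4 b5 b6 b7 b8 2 3 3 = 0"
    and "F8 0 b2 b4 b5 b6 b7 b8 2 3 4 = 0"
    and "F8 0 b2 b4 b5 b6 b7 b8 2 3 5 = 0"
    and "F8 0 b2 b4 b5 b6 b7 b8 2 3 6 = b4"
    and "F8 0 b2 b4 b5 b6 b7 b8 2 3 7 = b6"
    and "F8 0 b2 b4 b5 b6 b7 b8 2 4 0 = 0"
    and "F8 0 b2 b4 b5 b6 b7 b8 2 4 1 = 0"
    and "F8 0 b2 b4 b5 b6 b7 b8 2 4 2 = 0"
    and "F8 0 b2 b4 b5 b6 b7 b8 2 4 3 = 0"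
    and "F8 0 b2 b4 b5 b6 b7 b8 2 4 4 = 0"
    and "F8 0 b2 b4 b5 b6 b7 b8 2 4 5 = 0"
    and "F8 0 b2 b4 b5 b6 b7 b8 2 4 6 = 0"
    and "F8 0 b2 b4 b5 b6 b7 b8 2 4 7 = b4"
    and "F8 0 b2 b4 b5 b6 b7 b8 2 5 0 = 0"
    and "F8 0 b2 b4 b5 b6 b7 b8 2 5 1 = 0"
    and "F8 0 b2 b4 b5 b6 b7 b8 2 5 2 = 0"
    and "F8 0 b2 b4 b5 b6 b7 b8 2 5 3 = 0"
    and "F8 0 b2 b4 b5 b6 b7 b8 2 5 4 = 0"
    and "F8 0 b2 b4 b5 b6 b7 b8 2 5 5 = 0"
    and "F8 0 b2 b4 b5 b6 b7 b8 2 5 6 = 0"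
    and "F8 0 b2 b4 b5 b6 b7 b8 2 5 7 = 0"
    and "F8 0 b2 b4 b5 b6 b7 b8 2 6 0 = 0"
    and "F8 0 b2 b4 b5 b6 b7 b8 2 6 1 = 0"
    and "F8 0 b2 b4 b5 b6 b7 b8 2 6 2 = 0"
    and "F8 0 b2 b4 b5 b6 b7 b8 2 6 3 = 0"
    and "F8 0 b2 b4 b5 b6 b7 b8 2 6 4 = 0"
    and "F8 0 b2 b4 b5 b6 b7 b8 2 6 5 = 0"
    and "F8 0 b2 b4 b5 b6 b7 b8 2 6 6 = 0"
    and "F8 0 b2 b4 b5 b6 b7 b8 2 6 7 = 0"
    and "F8 0 b2 b4 b5 b6 b7 b8 2 7 0 = 0"
    and "F8 0 b2 b4 b5 b6 b7 b8 2 7 1 = 0"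
    and "F8 0 b2 b4 b5 b6 b7 b8 2 7 2 = 0"
    and "F8 0 b2 b4 b5 b6 b7 b8 2 7 3 = 0"
    and "F8 0 b2 b4 b5 b6 b7 b8 2 7 4 = 0"
    and "F8 0 b2 b4 b5 b6 b7 b8 2 7 5 = 0"
    and "F8 0 b2 b4 b5 b6 b7 b8 2 7 6 = 0"
    and "F8 0 b2 b4 b5 b6 b7 b8 2 7 7 = 0"
    and "F8 0 b2 b4 b5 b6 b7 b8 3 0 0 = 0"
    and "F8 0 b2 b4 b5 b6 b7 b8 3 0 1 = 0"
    and "F8 0 b2 b4 b5 b6 b7 b8 3 0 2 = 0"
    and "F8 0 b2 b4 b5 b6 b7 b8 3 0 3 = 0"
    and "F8 0 b2 b4 b5 b6 b7 b8 3 0 4 = - 1"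
    and "F8 0 b2 b4 b5 b6 b7 b8 3 0 5 = 0"
    and "F8 0 b2 b4 b5 b6 b7 b8 3 0 6 = 0"
    and "F8 0 b2 b4 b5 b6 b7 b8 3 0 7 = 0"
    and "F8 0 b2 b4 b5 b6 b7 b8 3 1 0 = 0"
    and "F8 0 b2 b4 b5 b6 b7 b8 3 1 1 = 0"
    and "F8 0 b2 b4 b5 b6 b7 b8 3 1 2 = 0"
    and "F8 0 b2 b4 b5 b6 b7 b8 3 1 3 = 0"
    and "F8 0 b2 b4 b5 b6 b7 b8 3 1 4 = 0"
    and "F8 0 b2 b4 b5 b6 b7 b8 3 1 5 = - (b2 + 2 * b4)"
    and "F8 0 b2 b4 b5 b6 b7 b8 3 1 6 = - (b5 + b6)"
    and "F8 0 b2 b4 b5 b6 b7 b8 3 1 7 = - (b7)"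
    and "F8 0 b2 b4 b5 b6 b7 b8 3 2 0 = 0"
    and "F8 0 b2 b4 b5 b6 b7 b8 3 2 1 = 0"
    and "F8 0 b2 b4 b5 b6 b7 b8 3 2 2 = 0"
    and "F8 0 b2 b4 b5 b6 b7 b8 3 2 3 = 0"
    and "F8 0 b2 b4 b5 b6 b7 b8 3 2 4 = 0"
    and "F8 0 b2 b4 b5 b6 b7 b8 3 2 5 = 0"
    and "F8 0 b2 b4 b5 b6 b7 b8 3 2 6 = - (b4)"
    and "F8 0 b2 b4 b5 b6 b7 b8 3 2 7 = - (b6)"
    and "F8 0 b2 b4 b5 b6 b7 b8 3 3 0 = 0"
    and "F8 0 b2 b4 b5 b6 b7 b8 3 3 1 = 0"
    and "F8 0 b2 b4 b5 b6 b7 b8 3 3 2 = 0"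
    and "F8 0 b2 b4 b5 b6 b7 b8 3 3 3 = 0"
    and "F8 0 b2 b4 b5 b6 b7 b8 3 3 4 = 0"
    and "F8 0 b2 b4 b5 b6 b7 b8 3 3 5 = 0"
    and "F8 0 b2 b4 b5 b6 b7 b8 3 3 6 = 0"
    and "F8 0 b2 b4 b5 b6 b7 b8 3 3 7 = 0"
    and "F8 0 b2 b4 b5 b6 b7 b8 3 4 0 = 0"
    and "F8 0 b2 b4 b5 b6 b7 b8 3 4 1 = 0"
    and "F8 0 b2 b4 b5 b6 b7 b8 3 4 2 = 0"
    and "F8 0 b2 b4 b5 b6 b7 b8 3 4 3 = 0"
    and "F8 0 b2 b4 b5 b6 b7 b8 3 4 4 = 0"
    and "F8 0 b2 b4 b5 b6 b7 b8 3 4 5 = 0"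
    and "F8 0 b2 b4 b5 b6 b7 b8 3 4 6 = 0"
    and "F8 0 b2 b4 b5 b6 b7 b8 3 4 7 = 0"
    and "F8 0 b2 b4 b5 b6 b7 b8 3 5 0 = 0"
    and "F8 0 b2 b4 b5 b6 b7 b8 3 5 1 = 0"
    and "F8 0 b2 b4 b5 b6 b7 b8 3 5 2 = 0"
    and "F8 0 b2 b4 b5 b6 b7 b8 3 5 3 = 0"
    and "F8 0 b2 b4 b5 b6 b7 b8 3 5 4 = 0"
    and "F8 0 b2 b4 b5 b6 b7 b8 3 5 5 = 0"
    and "F8 0 b2 b4 b5 b6 b7 b8 3 5 6 = 0"
    and "F8 0 b2 b4 b5 b6 b7 b8 3 5 7 = 0"
    and "F8 0 b2 b4 b5 b6 b7 b8 3 6 0 = 0"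
    and "F8 0 b2 b4 b5 b6 b7 b8 3 6 1 = 0"
    and "F8 0 b2 b4 b5 b6 b7 b8 3 6 2 = 0"
    and "F8 0 b2 b4 b5 b6 b7 b8 3 6 3 = 0"
    and "F8 0 b2 b4 b5 b6 b7 b8 3 6 4 = 0"
    and "F8 0 b2 b4 b5 b6 b7 b8 3 6 5 = 0"
    and "F8 0 b2 b4 b5 b6 b7 b8 3 6 6 = 0"
    and "F8 0 b2 b4 b5 b6 b7 b8 3 6 7 = 0"
    and "F8 0 b2 b4 b5 b6 b7 b8 3 7 0 = 0"
    and "F8 0 b2 b4 b5 b6 b7 b8 3 7 1 = 0"
    and "F8 0 b2 b4 b5 b6 b7 b8 3 7 2 = 0"
    and "F8 0 b2 b4 b5 b6 b7 b8 3 7 3 = 0"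
    and "F8 0 b2 b4 b5 b6 b7 b8 3 7 4 = 0"
    and "F8 0 b2 b4 b5 b6 b7 b8 3 7 5 = 0"
    and "F8 0 b2 b4 b5 b6 b7 b8 3 7 6 = 0"
    and "F8 0 b2 b4 b5 b6 b7 b8 3 7 7 = 0"
    and "F8 0 b2 b4 b5 b6 b7 b8 4 0 0 = 0"
    and "F8 0 b2 b4 b5 b6 b7 b8 4 0 1 = 0"
    and "F8 0 b2 b4 b5 b6 b7 b8 4 0 2 = 0"
    and "F8 0 b2 b4 b5 b6 b7 b8 4 0 3 = 0"
    and "F8 0 b2 b4 b5 b6 b7 b8 4 0 4 = 0"
    and "F8 0 b2 b4 b5 b6 b7 b8 4 0 5 = - 1"
    and "F8 0 b2 b4 b5 b6 b7 b8 4 0 6 = 0"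
    and "F8 0 b2 b4 b5 b6 b7 b8 4 0 7 = 0"
    and "F8 0 b2 b4 b5 b6 b7 b8 4 1 0 = 0"
    and "F8 0 b2 b4 b5 b6 b7 b8 4 1 1 = 0"
    and "F8 0 b2 b4 b5 b6 b7 b8 4 1 2 = 0"
    and "F8 0 b2 b4 b5 b6 b7 b8 4 1 3 = 0"
    and "F8 0 b2 b4 b5 b6 b7 b8 4 1 4 = 0"
    and "F8 0 b2 b4 b5 b6 b7 b8 4 1 5 = 0"
    and "F8 0 b2 b4 b5 b6 b7 b8 4 1 6 = - (b2 + b4)"
    and "F8 0 b2 b4 b5 b6 b7 b8 4 1 7 = - (b5)"
    and "F8 0 b2 b4 b5 b6 b7 b8 4 2 0 = 0"
    and "F8 0 b2 b4 b5 b6 b7 b8 4 2 1 = 0"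
    and "F8 0 b2 b4 b5 b6 b7 b8 4 2 2 = 0"
    and "F8 0 b2 b4 b5 b6 b7 b8 4 2 3 = 0"
    and "F8 0 b2 b4 b5 b6 b7 b8 4 2 4 = 0"
    and "F8 0 b2 b4 b5 b6 b7 b8 4 2 5 = 0"
    and "F8 0 b2 b4 b5 b6 b7 b8 4 2 6 = 0"
    and "F8 0 b2 b4 b5 b6 b7 b8 4 2 7 = - (b4)"
    and "F8 0 b2 b4 b5 b6 b7 b8 4 3 0 = 0"
    and "F8 0 b2 b4 b5 b6 b7 b8 4 3 1 = 0"
    and "F8 0 b2 b4 b5 b6 b7 b8 4 3 2 = 0"
    and "F8 0 b2 b4 b5 b6 b7 b8 4 3 3 = 0"
    and "F8 0 b2 b4 b5 b6 b7 b8 4 3 4 = 0"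
    and "F8 0 b2 b4 b5 b6 b7 b8 4 3 5 = 0"
    and "F8 0 b2 b4 b5 b6 b7 b8 4 3 6 = 0"
    and "F8 0 b2 b4 b5 b6 b7 b8 4 3 7 = 0"
    and "F8 0 b2 b4 b5 b6 b7 b8 4 4 0 = 0"
    and "F8 0 b2 b4 b5 b6 b7 b8 4 4 1 = 0"
    and "F8 0 b2 b4 b5 b6 b7 b8 4 4 2 = 0"
    and "F8 0 b2 b4 b5 b6 b7 b8 4 4 3 = 0"
    and "F8 0 b2 b4 b5 b6 b7 b8 4 4 4 = 0"
    and "F8 0 b2 b4 b5 b6 b7 b8 4 4 5 = 0"
    and "F8 0 b2 b4 b5 b6 b7 b8 4 4 6 = 0"
    and "F8 0 b2 b4 b5 b6 b7 b8 4 4 7 = 0"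
    and "F8 0 b2 b4 b5 b6 b7 b8 4 5 0 = 0"
    and "F8 0 b2 b4 b5 b6 b7 b8 4 5 1 = 0"
    and "F8 0 b2 b4 b5 b6 b7 b8 4 5 2 = 0"
    and "F8 0 b2 b4 b5 b6 b7 b8 4 5 3 = 0"
    and "F8 0 b2 b4 b5 b6 b7 b8 4 5 4 = 0"
    and "F8 0 b2 b4 b5 b6 b7 b8 4 5 5 = 0"
    and "F8 0 b2 b4 b5 b6 b7 b8 4 5 6 = 0"
    and "F8 0 b2 b4 b5 b6 b7 b8 4 5 7 = 0"
    and "F8 0 b2 b4 b5 b6 b7 b8 4 6 0 = 0"
    and "F8 0 b2 b4 b5 b6 b7 b8 4 6 1 = 0"
    and "F8 0 b2 b4 b5 b6 b7 b8 4 6 2 = 0"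
    and "F8 0 b2 b4 b5 b6 b7 b8 4 6 3 = 0"
    and "F8 0 b2 b4 b5 b6 b7 b8 4 6 4 = 0"
    and "F8 0 b2 b4 b5 b6 b7 b8 4 6 5 = 0"
    and "F8 0 b2 b4 b5 b6 b7 b8 4 6 6 = 0"
    and "F8 0 b2 b4 b5 b6 b7 b8 4 6 7 = 0"
    and "F8 0 b2 b4 b5 b6 b7 b8 4 7 0 = 0"
    and "F8 0 b2 b4 b5 b6 b7 b8 4 7 1 = 0"
    and "F8 0 b2 b4 b5 b6 b7 b8 4 7 2 = 0"
    and "F8 0 b2 b4 b5 b6 b7 b8 4 7 3 = 0"
    and "F8 0 b2 b4 b5 b6 b7 b8 4 7 4 = 0"
    and "F8 0 b2 b4 b5 b6 b7 b8 4 7 5 = 0"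
    and "F8 0 b2 b4 b5 b6 b7 b8 4 7 6 = 0"
    and "F8 0 b2 b4 b5 b6 b7 b8 4 7 7 = 0"
    and "F8 0 b2 b4 b5 b6 b7 b8 5 0 0 = 0"
    and "F8 0 b2 b4 b5 b6 b7 b8 5 0 1 = 0"
    and "F8 0 b2 b4 b5 b6 b7 b8 5 0 2 = 0"
    and "F8 0 b2 b4 b5 b6 b7 b8 5 0 3 = 0"
    and "F8 0 b2 b4 b5 b6 b7 b8 5 0 4 = 0"
    and "F8 0 b2 b4 b5 b6 b7 b8 5 0 5 = 0"
    and "F8 0 b2 b4 b5 b6 b7 b8 5 0 6 = - 1"
    and "F8 0 b2 b4 b5 b6 b7 b8 5 0 7 = 0"
    and "F8 0 b2 b4 b5 b6 b7 b8 5 1 0 = 0"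
    and "F8 0 b2 b4 b5 b6 b7 b8 5 1 1 = 0"
    and "F8 0 b2 b4 b5 b6 b7 b8 5 1 2 = 0"
    and "F8 0 b2 b4 b5 b6 b7 b8 5 1 3 = 0"
    and "F8 0 b2 b4 b5 b6 b7 b8 5 1 4 = 0"
    and "F8 0 b2 b4 b5 b6 b7 b8 5 1 5 = 0"
    and "F8 0 b2 b4 b5 b6 b7 b8 5 1 6 = 0"
    and "F8 0 b2 b4 b5 b6 b7 b8 5 1 7 = - (b2)"
    and "F8 0 b2 b4 b5 b6 b7 b8 5 2 0 = 0"
    and "F8 0 b2 b4 b5 b6 b7 b8 5 2 1 = 0"
    and "F8 0 b2 b4 b5 b6 b7 b8 5 2 2 = 0"
    and "F8 0 b2 b4 b5 b6 b7 b8 5 2 3 = 0"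
    and "F8 0 b2 b4 b5 b6 b7 b8 5 2 4 = 0"
    and "F8 0 b2 b4 b5 b6 b7 b8 5 2 5 = 0"
    and "F8 0 b2 b4 b5 b6 b7 b8 5 2 6 = 0"
    and "F8 0 b2 b4 b5 b6 b7 b8 5 2 7 = 0"
    and "F8 0 b2 b4 b5 b6 b7 b8 5 3 0 = 0"
    and "F8 0 b2 b4 b5 b6 b7 b8 5 3 1 = 0"
    and "F8 0 b2 b4 b5 b6 b7 b8 5 3 2 = 0"
    and "F8 0 b2 b4 b5 b6 b7 b8 5 3 3 = 0"
    and "F8 0 b2 b4 b5 b6 b7 b8 5 3 4 = 0"
    and "F8 0 b2 b4 b5 b6 b7 b8 5 3 5 = 0"
    and "F8 0 b2 b4 b5 b6 b7 b8 5 3 6 = 0"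
    and "F8 0 b2 b4 b5 b6 b7 b8 5 3 7 = 0"
    and "F8 0 b2 b4 b5 b6 b7 b8 5 4 0 = 0"
    and "F8 0 b2 b4 b5 b6 b7 b8 5 4 1 = 0"
    and "F8 0 b2 b4 b5 b6 b7 b8 5 4 2 = 0"
    and "F8 0 b2 b4 b5 b6 b7 b8 5 4 3 = 0"
    and "F8 0 b2 b4 b5 b6 b7 b8 5 4 4 = 0"
    and "F8 0 b2 b4 b5 b6 b7 b8 5 4 5 = 0"
    and "F8 0 b2 b4 b5 b6 b7 b8 5 4 6 = 0"
    and "F8 0 b2 b4 b5 b6 b7 b8 5 4 7 = 0"
    and "F8 0 b2 b4 b5 b6 b7 b8 5 5 0 = 0"
    and "F8 0 b2 b4 b5 b6 b7 b8 5 5 1 = 0"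
    and "F8 0 b2 b4 b5 b6 b7 b8 5 5 2 = 0"
    and "F8 0 b2 b4 b5 b6 b7 b8 5 5 3 = 0"
    and "F8 0 b2 b4 b5 b6 b7 b8 5 5 4 = 0"
    and "F8 0 b2 b4 b5 b6 b7 b8 5 5 5 = 0"
    and "F8 0 b2 b4 b5 b6 b7 b8 5 5 6 = 0"
    and "F8 0 b2 b4 b5 b6 b7 b8 5 5 7 = 0"
    and "F8 0 b2 b4 b5 b6 b7 b8 5 6 0 = 0"
    and "F8 0 b2 b4 b5 b6 b7 b8 5 6 1 = 0"
    and "F8 0 b2 b4 b5 b6 b7 b8 5 6 2 = 0"
    and "F8 0 b2 b4 b5 b6 b7 b8 5 6 3 = 0"
    and "F8 0 b2 b4 b5 b6 b7 b8 5 6 4 = 0"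
    and "F8 0 b2 b4 b5 b6 b7 b8 5 6 5 = 0"
    and "F8 0 b2 b4 b5 b6 b7 b8 5 6 6 = 0"
    and "F8 0 b2 b4 b5 b6 b7 b8 5 6 7 = 0"
    and "F8 0 b2 b4 b5 b6 b7 b8 5 7 0 = 0"
    and "F8 0 b2 b4 b5 b6 b7 b8 5 7 1 = 0"
    and "F8 0 b2 b4 b5 b6 b7 b8 5 7 2 = 0"
    and "F8 0 b2 b4 b5 b6 b7 b8 5 7 3 = 0"
    and "F8 0 b2 b4 b5 b6 b7 b8 5 7 4 = 0"
    and "F8 0 b2 b4 b5 b6 b7 b8 5 7 5 = 0"
    and "F8 0 b2 b4 b5 b6 b7 b8 5 7 6 = 0"
    and "F8 0 b2 b4 b5 b6 b7 b8 5 7 7 = 0"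
    and "F8 0 b2 b4 b5 b6 b7 b8 6 0 0 = 0"
    and "F8 0 b2 b4 b5 b6 b7 b8 6 0 1 = 0"
    and "F8 0 b2 b4 b5 b6 b7 b8 6 0 2 = 0"
    and "F8 0 b2 b4 b5 b6 b7 b8 6 0 3 = 0"
    and "F8 0 b2 b4 b5 b6 b7 b8 6 0 4 = 0"
    and "F8 0 b2 b4 b5 b6 b7 b8 6 0 5 = 0"
    and "F8 0 b2 b4 b5 b6 b7 b8 6 0 6 = 0"
    and "F8 0 b2 b4 b5 b6 b7 b8 6 0 7 = - 1"
    and "F8 0 b2 b4 b5 b6 b7 b8 6 1 0 = 0"
    and "F8 0 b2 b4 b5 b6 b7 b8 6 1 1 = 0"
    and "F8 0 b2 b4 b5 b6 b7 b8 6 1 2 = 0"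
    and "F8 0 b2 b4 b5 b6 b7 b8 6 1 3 = 0"
    and "F8 0 b2 b4 b5 b6 b7 b8 6 1 4 = 0"
    and "F8 0 b2 b4 b5 b6 b7 b8 6 1 5 = 0"
    and "F8 0 b2 b4 b5 b6 b7 b8 6 1 6 = 0"
    and "F8 0 b2 b4 b5 b6 b7 b8 6 1 7 = 0"
    and "F8 0 b2 b4 b5 b6 b7 b8 6 2 0 = 0"
    and "F8 0 b2 b4 b5 b6 b7 b8 6 2 1 = 0"
    and "F8 0 b2 b4 b5 b6 b7 b8 6 2 2 = 0"
    and "F8 0 b2 b4 b5 b6 b7 b8 6 2 3 = 0"
    and "F8 0 b2 b4 b5 b6 b7 b8 6 2 4 = 0"
    and "F8 0 b2 b4 b5 b6 b7 b8 6 2 5 = 0"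
    and "F8 0 b2 b4 b5 b6 b7 b8 6 2 6 = 0"
    and "F8 0 b2 b4 b5 b6 b7 b8 6 2 7 = 0"
    and "F8 0 b2 b4 b5 b6 b7 b8 6 3 0 = 0"
    and "F8 0 b2 b4 b5 b6 b7 b8 6 3 1 = 0"
    and "F8 0 b2 b4 b5 b6 b7 b8 6 3 2 = 0"
    and "F8 0 b2 b4 b5 b6 b7 b8 6 3 3 = 0"
    and "F8 0 b2 b4 b5 b6 b7 b8 6 3 4 = 0"
    and "F8 0 b2 b4 b5 b6 b7 b8 6 3 5 = 0"
    and "F8 0 b2 b4 b5 b6 b7 b8 6 3 6 = 0"
    and "F8 0 b2 b4 b5 b6 b7 b8 6 3 7 = 0"
    and "F8 0 b2 b4 b5 b6 b7 b8 6 4 0 = 0"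
    and "F8 0 b2 b4 b5 b6 b7 b8 6 4 1 = 0"
    and "F8 0 b2 b4 b5 b6 b7 b8 6 4 2 = 0"
    and "F8 0 b2 b4 b5 b6 b7 b8 6 4 3 = 0"
    and "F8 0 b2 b4 b5 b6 b7 b8 6 4 4 = 0"
    and "F8 0 b2 b4 b5 b6 b7 b8 6 4 5 = 0"
    and "F8 0 b2 b4 b5 b6 b7 b8 6 4 6 = 0"
    and "F8 0 b2 b4 b5 b6 b7 b8 6 4 7 = 0"
    and "F8 0 b2 b4 b5 b6 b7 b8 6 5 0 = 0"
    and "F8 0 b2 b4 b5 b6 b7 b8 6 5 1 = 0"
    and "F8 0 b2 b4 b5 b6 b7 b8 6 5 2 = 0"
    and "F8 0 b2 b4 b5 b6 b7 b8 6 5 3 = 0"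
    and "F8 0 b2 b4 b5 b6 b7 b8 6 5 4 = 0"
    and "F8 0 b2 b4 b5 b6 b7 b8 6 5 5 = 0"
    and "F8 0 b2 b4 b5 b6 b7 b8 6 5 6 = 0"
    and "F8 0 b2 b4 b5 b6 b7 b8 6 5 7 = 0"
    and "F8 0 b2 b4 b5 b6 b7 b8 6 6 0 = 0"
    and "F8 0 b2 b4 b5 b6 b7 b8 6 6 1 = 0"
    and "F8 0 b2 b4 b5 b6 b7 b8 6 6 2 = 0"
    and "F8 0 b2 b4 b5 b6 b7 b8 6 6 3 = 0"
    and "F8 0 b2 b4 b5 b6 b7 b8 6 6 4 = 0"
    and "F8 0 b2 b4 b5 b6 b7 b8 6 6 5 = 0"
    and "F8 0 b2 b4 b5 b6 b7 b8 6 6 6 = 0"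
    and "F8 0 b2 b4 b5 b6 b7 b8 6 6 7 = 0"
    and "F8 0 b2 b4 b5 b6 b7 b8 6 7 0 = 0"
    and "F8 0 b2 b4 b5 b6 b7 b8 6 7 1 = 0"
    and "F8 0 b2 b4 b5 b6 b7 b8 6 7 2 = 0"
    and "F8 0 b2 b4 b5 b6 b7 b8 6 7 3 = 0"
    and "F8 0 b2 b4 b5 b6 b7 b8 6 7 4 = 0"
    and "F8 0 b2 b4 b5 b6 b7 b8 6 7 5 = 0"
    and "F8 0 b2 b4 b5 b6 b7 b8 6 7 6 = 0"
    and "F8 0 b2 b4 b5 b6 b7 b8 6 7 7 = 0"
    and "F8 0 b2 b4 b5 b6 b7 b8 7 0 0 = 0"
    and "F8 0 b2 b4 b5 b6 b7 b8 7 0 1 = 0"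
    and "F8 0 b2 b4 b5 b6 b7 b8 7 0 2 = 0"
    and "F8 0 b2 b4 b5 b6 b7 b8 7 0 3 = 0"
    and "F8 0 b2 b4 b5 b6 b7 b8 7 0 4 = 0"
    and "F8 0 b2 b4 b5 b6 b7 b8 7 0 5 = 0"
    and "F8 0 b2 b4 b5 b6 b7 b8 7 0 6 = 0"
    and "F8 0 b2 b4 b5 b6 b7 b8 7 0 7 = 0"
    and "F8 0 b2 b4 b5 b6 b7 b8 7 1 0 = 0"
    and "F8 0 b2 b4 b5 b6 b7 b8 7 1 1 = 0"
    and "F8 0 b2 b4 b5 b6 b7 b8 7 1 2 = 0"
    and "F8 0 b2 b4 b5 b6 b7 b8 7 1 3 = 0"
    and "F8 0 b2 b4 b5 b6 b7 b8 7 1 4 = 0"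
    and "F8 0 b2 b4 b5 b6 b7 b8 7 1 5 = 0"
    and "F8 0 b2 b4 b5 b6 b7 b8 7 1 6 = 0"
    and "F8 0 b2 b4 b5 b6 b7 b8 7 1 7 = 0"
    and "F8 0 b2 b4 b5 b6 b7 b8 7 2 0 = 0"
    and "F8 0 b2 b4 b5 b6 b7 b8 7 2 1 = 0"
    and "F8 0 b2 b4 b5 b6 b7 b8 7 2 2 = 0"
    and "F8 0 b2 b4 b5 b6 b7 b8 7 2 3 = 0"
    and "F8 0 b2 b4 b5 b6 b7 b8 7 2 4 = 0"
    and "F8 0 b2 b4 b5 b6 b7 b8 7 2 5 = 0"
    and "F8 0 b2 b4 b5 b6 b7 b8 7 2 6 = 0"
    and "F8 0 b2 b4 b5 b6 b7 b8 7 2 7 = 0"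
    and "F8 0 b2 b4 b5 b6 b7 b8 7 3 0 = 0"
    and "F8 0 b2 b4 b5 b6 b7 b8 7 3 1 = 0"
    and "F8 0 b2 b4 b5 b6 b7 b8 7 3 2 = 0"
    and "F8 0 b2 b4 b5 b6 b7 b8 7 3 3 = 0"
    and "F8 0 b2 b4 b5 b6 b7 b8 7 3 4 = 0"
    and "F8 0 b2 b4 b5 b6 b7 b8 7 3 5 = 0"
    and "F8 0 b2 b4 b5 b6 b7 b8 7 3 6 = 0"
    and "F8 0 b2 b4 b5 b6 b7 b8 7 3 7 = 0"
    and "F8 0 b2 b4 b5 b6 b7 b8 7 4 0 = 0"
    and "F8 0 b2 b4 b5 b6 b7 b8 7 4 1 = 0"
    and "F8 0 b2 b4 b5 b6 b7 b8 7 4 2 = 0"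
    and "F8 0 b2 b4 b5 b6 b7 b8 7 4 3 = 0"
    and "F8 0 b2 b4 b5 b6 b7 b8 7 4 4 = 0"
    and "F8 0 b2 b4 b5 b6 b7 b8 7 4 5 = 0"
    and "F8 0 b2 b4 b5 b6 b7 b8 7 4 6 = 0"
    and "F8 0 b2 b4 b5 b6 b7 b8 7 4 7 = 0"
    and "F8 0 b2 b4 b5 b6 b7 b8 7 5 0 = 0"
    and "F8 0 b2 b4 b5 b6 b7 b8 7 5 1 = 0"
    and "F8 0 b2 b4 b5 b6 b7 b8 7 5 2 = 0"
    and "F8 0 b2 b4 b5 b6 b7 b8 7 5 3 = 0"
    and "F8 0 b2 b4 b5 b6 b7 b8 7 5 4 = 0"
    and "F8 0 b2 b4 b5 b6 b7 b8 7 5 5 = 0"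
    and "F8 0 b2 b4 b5 b6 b7 b8 7 5 6 = 0"
    and "F8 0 b2 b4 b5 b6 b7 b8 7 5 7 = 0"
    and "F8 0 b2 b4 b5 b6 b7 b8 7 6 0 = 0"
    and "F8 0 b2 b4 b5 b6 b7 b8 7 6 1 = 0"
    and "F8 0 b2 b4 b5 b6 b7 b8 7 6 2 = 0"
    and "F8 0 b2 b4 b5 b6 b7 b8 7 6 3 = 0"
    and "F8 0 b2 b4 b5 b6 b7 b8 7 6 4 = 0"
    and "F8 0 b2 b4 b5 b6 b7 b8 7 6 5 = 0"
    and "F8 0 b2 b4 b5 b6 b7 b8 7 6 6 = 0"
    and "F8 0 b2 b4 b5 b6 b7 b8 7 6 7 = 0"
    and "F8 0 b2 b4 b5 b6 b7 b8 7 7 0 = 0"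
    and "F8 0 b2 b4 b5 b6 b7 b8 7 7 1 = 0"
    and "F8 0 b2 b4 b5 b6 b7 b8 7 7 2 = 0"
    and "F8 0 b2 b4 b5 b6 b7 b8 7 7 3 = 0"
    and "F8 0 b2 b4 b5 b6 b7 b8 7 7 4 = 0"
    and "F8 0 b2 b4 b5 b6 b7 b8 7 7 5 = 0"
    and "F8 0 b2 b4 b5 b6 b7 b8 7 7 6 = 0"
    and "F8 0 b2 b4 b5 b6 b7 b8 7 7 7 = 0"
  by (simp_all add: F8_def F8_up_def)
lemma lt8: "{..<(8::nat)} = {0,1,2,3,4,5,6,7}"
  by (simp add: numeral_eq_Suc lessThan_Suc insert_commute)
lemma all8: "(\<forall>i<(8::nat). P i) \<longleftrightarrow> P 0 \<and> P 1 \<and> P 2 \<and> P 3 \<and> P 4 \<and> P 5 \<and> P 6 \<and> P 7"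
proof -
  have "(\<forall>i<(8::nat). P i) \<longleftrightarrow> (\<forall>i\<in>{..<8}. P i)" by auto
  also have "\<dots> \<longleftrightarrow> P 0 \<and> P 1 \<and> P 2 \<and> P 3 \<and> P 4 \<and> P 5 \<and> P 6 \<and> P 7" unfolding lt8 by simp
  finally show ?thesis .
qed
lemma sum8: "(\<Sum>s<(8::nat). f s) = f 0 + f 1 + f 2 + f 3 + f 4 + f 5 + f 6 + f 7"
  unfolding lt8 by (simp add: add.assoc)


lemma F8_nz:
  assumes "F8 a1 a2 a4 a5 a6 a7 a8 i j k \<noteq> 0"
  shows "i < k \<and> j < k \<and> k < 8"
  using assms unfolding F8_def F8_up_def by (auto split: if_splits)

lemma lt8_cases: "(k::nat) < 8 \<Longrightarrow> k = 0 \<or> k = 1 \<or> k = 2 \<or> k = 3 \<or> k = 4 \<or> k = 5 \<or> k = 6 \<or> k = 7"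
  by auto

lemma jac_all:
  fixes b2 b4 b5 b6 b7 b8 :: "'a::comm_ring_1"
  shows "\<forall>i<8. \<forall>j<8. \<forall>l<8. \<forall>m<8.
          (\<Sum>s<8. F8 0 b2 b4 b5 b6 b7 b8 i j s * F8 0 b2 b4 b5 b6 b7 b8 s l m + F8 0 b2 b4 b5 b6 b7 b8 j l s * F8 0 b2 b4 b5 b6 b7 b8 s i m + F8 0 b2 b4 b5 b6 b7 b8 l i s * F8 0 b2 b4 b5 b6 b7 b8 s j m) = 0"
  unfolding all8 sum8 F8tab by (simp add: algebra_simps)

lemma is_lie_F8:
  fixes b2 b4 b5 b6 b7 b8 :: "'a::comm_ring_1"
  shows "is_lie 8 (F8 0 b2 b4 b5 b6 b7 b8)"
proof -
  have amb: "in_ambient 8 (F8 0 b2 b4 b5 b6 b7 b8)"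
    unfolding in_ambient_def using F8_nz by fastforce
  have sk: "\<forall>i j k. F8 0 b2 b4 b5 b6 b7 b8 i j k = - F8 0 b2 b4 b5 b6 b7 b8 j i k"
    by (simp add: F8_def)
  have dg: "\<forall>i k. F8 0 b2 b4 b5 b6 b7 b8 i i k = 0"
    by (simp add: F8_def)
  show ?thesis unfolding is_lie_def using amb sk dg jac_all by blast
qed

definition brC :: "'a::comm_ring_1 \<Rightarrow> 'a \<Rightarrow> 'a \<Rightarrow> 'a \<Rightarrow> 'a \<Rightarrow> 'a \<Rightarrow> (nat \<Rightarrow> 'a) \<Rightarrow> (nat \<Rightarrow> 'a) \<Rightarrow> nat \<Rightarrow> 'a" where
  "brC b2 b4 b5 b6 b7 b8 x y k = (
     if k = 2 then x 0 * y 1 - x 1 * y 0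
     else      if k = 3 then x 0 * y 2 - x 2 * y 0
     else      if k = 4 then x 0 * y 3 + b2 * x 1 * y 2 + 2 * b4 * x 1 * y 2 - b2 * x 2 * y 1 - 2 * b4 * x 2 * y 1 - x 3 * y 0
     else      if k = 5 then x 0 * y 4 + b5 * x 1 * y 2 + b6 * x 1 * y 2 + b2 * x 1 * y 3 + 2 * b4 * x 1 * y 3 - b5 * x 2 * y 1 - b6 * x 2 * y 1 - b2 * x 3 * y 1 - 2 * b4 * x 3 * y 1 - x 4 * y 0
     else      if k = 6 then x 0 * y 5 + b7 * x 1 * y 2 + b5 * x 1 * y 3 + b6 * x 1 * y 3 + b2 * x 1 * y 4 + b4 * x 1 * y 4 - b7 * x 2 * y 1 + b4 * x 2 * y 3 - b5 * x 3 * y 1 - b6 * x 3 * y 1 - b4 * x 3 * y 2 - b2 * x 4 * y 1 - b4 * x 4 * y 1 - x 5 * y 0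
     else      if k = 7 then x 0 * y 6 + b8 * x 1 * y 2 + b7 * x 1 * y 3 + b5 * x 1 * y 4 + b2 * x 1 * y 5 - b8 * x 2 * y 1 + b6 * x 2 * y 3 + b4 * x 2 * y 4 - b7 * x 3 * y 1 - b6 * x 3 * y 2 - b5 * x 4 * y 1 - b4 * x 4 * y 2 - b2 * x 5 * y 1 - x 6 * y 0
     else 0)"

lemma br_F8: "br 8 (F8 0 b2 b4 b5 b6 b7 b8) x y = brC b2 b4 b5 b6 b7 b8 x y"
proof
  fix k
  show "br 8 (F8 0 b2 b4 b5 b6 b7 b8) x y k = brC b2 b4 b5 b6 b7 b8 x y k"
  proof (cases "k < 8")
    case True
    then show ?thesis
      unfolding br_def sum8
      by (elim lt8_cases[elim_format] disjE) (simp_all only: F8tab, simp_all add: brC_def algebra_simps)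
  next
    case False
    then have "\<And>i j. F8 0 b2 b4 b5 b6 b7 b8 i j k = 0" using F8_nz by fastforce
    then show ?thesis using False by (simp add: br_def brC_def)
  qed
qed



definition lowv :: "nat \<Rightarrow> (nat \<Rightarrow> 'a::zero) set" where
  "lowv m = {v. v \<in> vecs 8 \<and> (\<forall>i<m. v i = 0)}"

definition e :: "nat \<Rightarrow> nat \<Rightarrow> 'a::{zero,one}" where
  "e j = (\<lambda>k. if k = j then 1 else 0)"

lemma br_vecs: "br 8 (F8 0 b2 b4 b5 b6 b7 b8) x y \<in> vecs 8"
  unfolding vecs_def br_F8 brC_def by auto

lemma br_low_gen:
  assumes "\<forall>i<m. v i = 0"
  shows "br 8 (F8 0 b2 b4 b5 b6 b7 b8) x v \<in> lowv (Suc m)"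
proof -
  have "br 8 (F8 0 b2 b4 b5 b6 b7 b8) x v k = 0" if "k < Suc m" for k
  proof -
    have "x i * v j * F8 0 b2 b4 b5 b6 b7 b8 i j k = 0" for i j
    proof (cases "F8 0 b2 b4 b5 b6 b7 b8 i j k = 0")
      case False
      then have "j < k" using F8_nz by blast
      then have "v j = 0" using assms that by auto
      then show ?thesis by simp
    qed simp
    then show ?thesis unfolding br_def by simp
  qed
  then show ?thesis using br_vecs unfolding lowv_def by blast
qed

lemma br_low2: "br 8 (F8 0 b2 b4 b5 b6 b7 b8) x y \<in> lowv 2"
  unfolding lowv_def using br_vecs by (auto simp: br_F8 brC_def)

lemma lspan_low:
  assumes "S \<subseteq> lowv m"
  shows "lspan S \<subseteq> lowv m"
proof
  fix v assume "v \<in> lspan S"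
  then have "\<exists>(n::nat) c u. (\<forall>i<n. u i \<in> S) \<and> v = (\<lambda>k. \<Sum>i<n. c i * u i k)"
    by (simp add: lspan_def)
  then obtain n :: nat and c u where u: "\<forall>i<n. u i \<in> S" and v: "v = (\<lambda>k. \<Sum>i<n. c i * u i k)"
    by blast
  have "\<forall>i<n. u i \<in> lowv m" using u assms by blast
  then show "v \<in> lowv m" unfolding v lowv_def vecs_def by auto
qed

lemma lcs_low:
  fixes C :: "'a::comm_ring_1 sc"
  assumes "C = F8 0 b2 b4 b5 b6 b7 b8"
  shows "lcs 8 C (Suc t) \<subseteq> lowv (t + 2)"
proof (induction t)
  case 0
  have "{br 8 C x y |x y. x \<in> vecs 8 \<and> y \<in> lcs 8 C 0} \<subseteq> lowv 2"
    using br_low2[of b2 b4 b5 b6 b7 b8] unfolding assms by blast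
  then have "lspan {br 8 C x y |x y. x \<in> vecs 8 \<and> y \<in> lcs 8 C 0} \<subseteq> lowv 2" by (rule lspan_low)
  then show ?case by (simp add: numeral_2_eq_2)
next
  case (Suc t)
  have "{br 8 C x y |x y. x \<in> vecs 8 \<and> y \<in> lcs 8 C (Suc t)} \<subseteq> lowv (Suc t + 2)"
  proof
    fix z assume "z \<in> {br 8 C x y |x y. x \<in> vecs 8 \<and> y \<in> lcs 8 C (Suc t)}"
    then obtain x y where z: "z = br 8 C x y" and y: "y \<in> lcs 8 C (Suc t)" by blast
    have "\<forall>i<t+2. y i = 0" using Suc y unfolding lowv_def by blast
    from br_low_gen[OF this] show "z \<in> lowv (Suc t + 2)" using z assms by simp
  qed
  then show ?case by (simp only: lcs.simps) (rule lspan_low)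
qed

lemma zero_lspan: "(\<lambda>_. 0) \<in> lspan S"
  unfolding lspan_def by (rule CollectI, rule exI[of _ 0]) auto

lemma single_lspan: "u \<in> S \<Longrightarrow> u \<in> lspan S"
  unfolding lspan_def
  by (rule CollectI, rule exI[of _ 1], rule exI[of _ "\<lambda>_. 1"], rule exI[of _ "\<lambda>_. u"]) auto

lemma br_e0: "1 \<le> j \<Longrightarrow> j \<le> 6 \<Longrightarrow> br 8 (F8 0 b2 b4 b5 b6 b7 b8) (e 0) (e j) = e (Suc j)"
  by (rule ext) (auto simp: br_F8 brC_def e_def)

lemma lcs_e:
  fixes C :: "'a::comm_ring_1 sc"
  assumes "C = F8 0 b2 b4 b5 b6 b7 b8"
  shows "t \<le> 6 \<Longrightarrow> e (Suc t) \<in> lcs 8 C t"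
proof (induction t)
  case 0
  then show ?case by (simp add: vecs_def e_def)
next
  case (Suc t)
  then have "e (Suc t) \<in> lcs 8 C t" by simp
  moreover have "e 0 \<in> vecs 8" by (simp add: vecs_def e_def)
  moreover have "br 8 C (e 0) (e (Suc t)) = e (Suc (Suc t))"
    using Suc.prems unfolding assms by (intro br_e0) auto
  ultimately have "e (Suc (Suc t)) \<in> {br 8 C x y |x y. x \<in> vecs 8 \<and> y \<in> lcs 8 C t}"
    by (intro CollectI exI[of _ "e 0"] exI[of _ "e (Suc t)"]) simp
  then show ?case by (simp only: lcs.simps) (rule single_lspan)
qed

lemma fil_F8:
  fixes b2 b4 b5 b6 b7 b8 :: "'a::comm_ring_1"
  shows "F8 0 b2 b4 b5 b6 b7 b8 \<in> Fil_var 8"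
proof -
  let ?C = "F8 0 b2 b4 b5 b6 b7 b8"
  have "lcs 8 ?C 7 \<subseteq> lowv 8" using lcs_low[of ?C b2 b4 b5 b6 b7 b8 6] by simp
  moreover have "lowv 8 \<subseteq> {\<lambda>_. 0::'a}"
  proof
    fix v :: "nat \<Rightarrow> 'a" assume "v \<in> lowv 8"
    then have "v k = 0" for k unfolding lowv_def vecs_def by (cases "k < 8") auto
    then show "v \<in> {\<lambda>_. 0}" by auto
  qed
  moreover have "(\<lambda>_. 0) \<in> lcs 8 ?C (Suc 6)" by (simp only: lcs.simps(2)) (rule zero_lspan)
  moreover have "lcs 8 ?C (Suc 6) = lcs 8 ?C 7" by (rule arg_cong[where f="lcs 8 ?C"]) simp
  ultimately have 7: "lcs 8 ?C 7 = {\<lambda>_. 0}" by auto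
  have "e 7 \<in> lcs 8 ?C 6" using lcs_e[of ?C b2 b4 b5 b6 b7 b8 6] by simp
  moreover have "e 7 \<noteq> (\<lambda>_. 0::'a)" by (metis e_def zero_neq_one)
  ultimately have 6: "lcs 8 ?C 6 \<noteq> {\<lambda>_. 0}" by auto
  show ?thesis unfolding Fil_var_def filiform_br_def using 6 7 is_lie_F8 by simp
qed



lemma polyfun_curve:
  fixes \<Gamma> :: "'a::comm_ring_1 \<Rightarrow> 'a sc" and Q :: "nat \<Rightarrow> nat \<Rightarrow> nat \<Rightarrow> 'a poly"
  assumes "p \<in> polyfun" and cv: "\<forall>t i j k. \<Gamma> t i j k = poly (Q i j k) t"
  shows "\<exists>r. \<forall>t. p (\<Gamma> t) = poly r t"
  using assms(1)
proof induction
  case (pf_const c)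
  show ?case by (rule exI[of _ "[:c:]"]) simp
next
  case (pf_coord i j k)
  show ?case by (rule exI[of _ "Q i j k"]) (simp add: cv)
next
  case (pf_add p q)
  then obtain r1 r2 where "\<forall>t. p (\<Gamma> t) = poly r1 t" "\<forall>t. q (\<Gamma> t) = poly r2 t" by blast
  then show ?case by (intro exI[of _ "r1 + r2"]) simp
next
  case (pf_mult p q)
  then obtain r1 r2 where "\<forall>t. p (\<Gamma> t) = poly r1 t" "\<forall>t. q (\<Gamma> t) = poly r2 t" by blast
  then show ?case by (intro exI[of _ "r1 * r2"]) simp
qed

lemma not_open_curve:
  fixes C0 :: "'a::field_char_0 sc" and \<Gamma> :: "'a \<Rightarrow> 'a sc" and Q :: "nat \<Rightarrow> nat \<Rightarrow> nat \<Rightarrow> 'a poly"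
  assumes cv: "\<forall>t i j k. \<Gamma> t i j k = poly (Q i j k) t"
    and inS: "\<forall>t. \<Gamma> t \<in> S" and at0: "\<Gamma> 0 = C0" and C0O: "C0 \<in> Orb"
    and out: "\<forall>t. t \<noteq> 0 \<longrightarrow> \<Gamma> t \<notin> Orb"
  shows "\<not> zariski_open_in S Orb"
proof
  assume "zariski_open_in S Orb"
  then obtain P where P: "P \<subseteq> polyfun" and Orb: "Orb = S \<inter> {C. \<exists>p\<in>P. p C \<noteq> 0}"
    unfolding zariski_open_in_def by blast
  then obtain p where p: "p \<in> P" "p C0 \<noteq> 0" using C0O by blast
  then obtain r where r: "\<forall>t. p (\<Gamma> t) = poly r t" using polyfun_curve[OF _ cv] P by blast
  have "poly r 0 \<noteq> 0" using r p at0 by metis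
  then have "r \<noteq> 0" by auto
  then have fin: "finite {t. poly r t = 0}" by (rule poly_roots_finite)
  have "UNIV \<subseteq> insert 0 {t. poly r t = 0}"
  proof
    fix t :: 'a
    show "t \<in> insert 0 {t. poly r t = 0}"
    proof (cases "t = 0")
      case False
      then have "\<Gamma> t \<notin> Orb" using out by blast
      then have "p (\<Gamma> t) = 0" using inS Orb p(1) by blast
      then show ?thesis using r by simp
    qed simp
  qed
  then have "finite (UNIV :: 'a set)" using fin finite_subset by blast
  then show False using infinite_UNIV_char_0 by blast
qed



lemma sum_swap3:
  fixes A :: "nat set"
  shows "(\<Sum>c\<in>A. g c * (\<Sum>i\<in>A. \<Sum>j\<in>A. x i * y j * K i j c)) =
         (\<Sum>i\<in>A. \<Sum>j\<in>A. x i * y j * (\<Sum>c\<in>A. K i j c * (g c :: 'a::comm_ring_1)))"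
proof -
  have "(\<Sum>c\<in>A. g c * (\<Sum>i\<in>A. \<Sum>j\<in>A. x i * y j * K i j c)) =
        (\<Sum>c\<in>A. \<Sum>i\<in>A. \<Sum>j\<in>A. g c * (x i * y j * K i j c))"
    by (simp add: sum_distrib_left)
  also have "\<dots> = (\<Sum>i\<in>A. \<Sum>c\<in>A. \<Sum>j\<in>A. g c * (x i * y j * K i j c))"
    by (rule sum.swap)
  also have "\<dots> = (\<Sum>i\<in>A. \<Sum>j\<in>A. \<Sum>c\<in>A. g c * (x i * y j * K i j c))"
    by (rule sum.cong[OF refl], rule sum.swap)
  also have "\<dots> = (\<Sum>i\<in>A. \<Sum>j\<in>A. x i * y j * (\<Sum>c\<in>A. K i j c * g c))"
    by (simp add: sum_distrib_left mult_ac)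
  finally show ?thesis .
qed

lemma sum_swap4:
  fixes A :: "nat set"
  shows "(\<Sum>a\<in>A. \<Sum>b\<in>A. (\<Sum>i\<in>A. g a i * x i) * (\<Sum>j\<in>A. g b j * y j) * K a b) =
         (\<Sum>i\<in>A. \<Sum>j\<in>A. x i * y j * (\<Sum>a\<in>A. \<Sum>b\<in>A. g a i * g b j * (K a b :: 'a::comm_ring_1)))"
proof -
  have "(\<Sum>a\<in>A. \<Sum>b\<in>A. (\<Sum>i\<in>A. g a i * x i) * (\<Sum>j\<in>A. g b j * y j) * K a b) =
        (\<Sum>a\<in>A. \<Sum>b\<in>A. \<Sum>i\<in>A. \<Sum>j\<in>A. x i * y j * (g a i * g b j * K a b))"
    by (rule sum.cong[OF refl], rule sum.cong[OF refl]) (simp only: sum_product sum_distrib_right, (rule sum.cong[OF refl])+, simp add: sum_distrib_left mult_ac)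
  also have "\<dots> = (\<Sum>a\<in>A. \<Sum>i\<in>A. \<Sum>b\<in>A. \<Sum>j\<in>A. x i * y j * (g a i * g b j * K a b))"
    by (rule sum.cong[OF refl], rule sum.swap)
  also have "\<dots> = (\<Sum>i\<in>A. \<Sum>a\<in>A. \<Sum>b\<in>A. \<Sum>j\<in>A. x i * y j * (g a i * g b j * K a b))"
    by (rule sum.swap)
  also have "\<dots> = (\<Sum>i\<in>A. \<Sum>a\<in>A. \<Sum>j\<in>A. \<Sum>b\<in>A. x i * y j * (g a i * g b j * K a b))"
    by (rule sum.cong[OF refl], rule sum.cong[OF refl], rule sum.swap)
  also have "\<dots> = (\<Sum>i\<in>A. \<Sum>j\<in>A. \<Sum>a\<in>A. \<Sum>b\<in>A. x i * y j * (g a i * g b j * K a b))"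
    by (rule sum.cong[OF refl], rule sum.swap)
  also have "\<dots> = (\<Sum>i\<in>A. \<Sum>j\<in>A. x i * y j * (\<Sum>a\<in>A. \<Sum>b\<in>A. g a i * g b j * K a b))"
    by (simp add: sum_distrib_left)
  finally show ?thesis .
qed

lemma sum_inv:
  fixes g h :: "nat \<Rightarrow> nat \<Rightarrow> 'a::comm_ring_1"
  assumes "\<forall>l<8. (\<Sum>i<8. g k i * h i l) = (if k = l then 1 else 0)" "k < 8"
  shows "(\<Sum>i<8. g k i * (\<Sum>l<8. h i l * v l)) = v k"
proof -
  have "(\<Sum>i<8. g k i * (\<Sum>l<8. h i l * v l)) = (\<Sum>i<8. \<Sum>l<8. g k i * h i l * v l)"
    by (simp add: sum_distrib_left mult_ac)
  also have "\<dots> = (\<Sum>l<8. \<Sum>i<8. g k i * h i l * v l)" by (rule sum.swap)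
  also have "\<dots> = (\<Sum>l<8. (\<Sum>i<8. g k i * h i l) * v l)" by (simp add: sum_distrib_right)
  also have "\<dots> = (\<Sum>l<8. (if k = l then v l else 0))"
    using assms(1) by (intro sum.cong refl) simp
  also have "\<dots> = v k" using assms(2) by simp
  finally show ?thesis .
qed

lemma lowvD: "v \<in> lowv m \<Longrightarrow> i < m \<Longrightarrow> v i = 0"
  unfolding lowv_def by blast

lemma lowv_vecs: "v \<in> lowv m \<Longrightarrow> v \<in> vecs 8"
  unfolding lowv_def by blast

lemma br_step:
  assumes v: "v \<in> lowv m" and m: "1 \<le> m" "m \<le> 6"
  shows "brC b2 b4 b5 b6 b7 b8 x v (Suc m) = x 0 * v m"
proof -
  have "m = 1 \<or> m = 2 \<or> m = 3 \<or> m = 4 \<or> m = 5 \<or> m = 6" using m by auto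
  then show ?thesis
    using lowvD[OF v, of 0] lowvD[OF v, of 1] lowvD[OF v, of 2] lowvD[OF v, of 3]
      lowvD[OF v, of 4] lowvD[OF v, of 5]
    by (elim disjE) (simp_all add: brC_def)
qed

lemma E1shape:
  assumes y: "y 0 = 0" and v: "v \<in> lowv 5"
  shows "brC b2 b4 b5 b6 b7 b8 y v = (\<lambda>k. b2 * (y 1 * v 5) * e 7 k)"
  using lowvD[OF v, of 0] lowvD[OF v, of 1] lowvD[OF v, of 2] lowvD[OF v, of 3]
      lowvD[OF v, of 4] y
  by (intro ext) (simp add: brC_def e_def)

lemma E2shape:
  assumes u: "u \<in> lowv 2" and v: "v \<in> lowv 4"
  shows "brC b2 b4 b5 b6 b7 b8 u v = (\<lambda>k. b4 * (u 2 * v 4) * e 7 k)"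
  using lowvD[OF v, of 0] lowvD[OF v, of 1] lowvD[OF v, of 2] lowvD[OF v, of 3]
      lowvD[OF u, of 0] lowvD[OF u, of 1]
  by (intro ext) (simp add: brC_def e_def)

lemma coord3: "brC b2 b4 b5 b6 b7 b8 y u 3 = y 0 * u 2 - y 2 * u 0"
  by (simp add: brC_def)

lemma coord2: "brC b2 b4 b5 b6 b7 b8 x y 2 = x 0 * y 1 - x 1 * y 0"
  by (simp add: brC_def)

lemma B1_12: "brC c2 c4 c5 c6 c7 c8 (e 1) (e 2) =
   (\<lambda>k. (c2 + 2 * c4) * e 4 k + ((c5 + c6) * e 5 k + (c7 * e 6 k + c8 * e 7 k)))"
  by (intro ext) (simp add: brC_def e_def)

lemma B1_15: "brC c2 c4 c5 c6 c7 c8 (e 1) (e 5) = (\<lambda>k. c2 * e 7 k)"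
  by (intro ext) (simp add: brC_def e_def)

lemma B1_24: "brC c2 c4 c5 c6 c7 c8 (e 2) (e 4) = (\<lambda>k. c4 * e 7 k)"
  by (intro ext) (simp add: brC_def e_def)

lemma brC_e0: "1 \<le> j \<Longrightarrow> j \<le> 6 \<Longrightarrow> brC c2 c4 c5 c6 c7 c8 (e 0) (e j) = e (Suc j)"
  using br_e0[of j c2 c4 c5 c6 c7 c8] by (simp add: br_F8)

lemma brC_low2: "brC b2 b4 b5 b6 b7 b8 x y \<in> lowv 2"
  using br_low2[of b2 b4 b5 b6 b7 b8 x y] by (simp add: br_F8)

lemma brC_low: "v \<in> lowv m \<Longrightarrow> brC b2 b4 b5 b6 b7 b8 x v \<in> lowv (Suc m)"
proof -
  assume "v \<in> lowv m"
  then have "\<forall>i<m. v i = 0" using lowvD by blast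
  from br_low_gen[OF this, of b2 b4 b5 b6 b7 b8 x] show ?thesis by (simp add: br_F8)
qed

lemma e_vecs: "j < 8 \<Longrightarrow> e j \<in> vecs 8"
  by (simp add: e_def vecs_def)

lemma noniso:
  fixes b2 b4 b5 b6 b7 b8 c2 c4 c5 c6 c7 c8 p q :: "'a::field"
  assumes pq: "p * b2 = q * b4" "p * c2 \<noteq> q * c4"
  shows "F8 0 c2 c4 c5 c6 c7 c8 \<notin> gl_orbit 8 (F8 0 b2 b4 b5 b6 b7 b8)"
proof
  let ?C0 = "F8 0 b2 b4 b5 b6 b7 b8" and ?C1 = "F8 0 c2 c4 c5 c6 c7 c8"
  assume "?C1 \<in> gl_orbit 8 ?C0"
  then obtain g where inv: "invertible_mat 8 g" and
    eq: "\<forall>i<8. \<forall>j<8. \<forall>k<8. (\<Sum>c<8. ?C0 i j c * g k c) = (\<Sum>a<8. \<Sum>b<8. g a i * g b j * ?C1 a b k)"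
    unfolding gl_orbit_def by blast
  from inv obtain h where
    gh: "\<forall>i<8. \<forall>j<8. (\<Sum>l<8. g i l * h l j) = (if i = j then 1 else 0)" and
    hg: "\<forall>i<8. \<forall>j<8. (\<Sum>l<8. h i l * g l j) = (if i = j then 1 else 0)"
    unfolding invertible_mat_def by blast
  define F where "F v = (\<lambda>k. if k < 8 then \<Sum>i<8. g k i * v i else 0)" for v :: "nat \<Rightarrow> 'a"
  define H where "H v = (\<lambda>k. if k < 8 then \<Sum>i<8. h k i * v i else 0)" for v :: "nat \<Rightarrow> 'a"
  define B0 where "B0 = brC b2 b4 b5 b6 b7 b8"
  define B1 where "B1 = brC c2 c4 c5 c6 c7 c8"
  have Fhom: "F (B0 x y) = B1 (F x) (F y)" for x y
  proof (rule ext)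
    fix k show "F (B0 x y) k = B1 (F x) (F y) k"
    proof (cases "k < 8")
      case True
      have "F (B0 x y) k = (\<Sum>c<8. g k c * (\<Sum>i<8. \<Sum>j<8. x i * y j * ?C0 i j c))"
        using True by (simp add: F_def B0_def br_F8[symmetric] br_def)
      also have "\<dots> = (\<Sum>i<8. \<Sum>j<8. x i * y j * (\<Sum>c<8. ?C0 i j c * g k c))" by (rule sum_swap3)
      also have "\<dots> = (\<Sum>i<8. \<Sum>j<8. x i * y j * (\<Sum>a<8. \<Sum>b<8. g a i * g b j * ?C1 a b k))"
        using eq True by (intro sum.cong refl) simp
      also have "\<dots> = (\<Sum>a<8. \<Sum>b<8. (\<Sum>i<8. g a i * x i) * (\<Sum>j<8. g b j * y j) * ?C1 a b k)"
        by (rule sum_swap4[symmetric])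
      also have "\<dots> = (\<Sum>a<8. \<Sum>b<8. F x a * F y b * ?C1 a b k)"
        by (rule sum.cong[OF refl], rule sum.cong[OF refl]) (simp add: F_def)
      also have "\<dots> = B1 (F x) (F y) k" by (simp add: B1_def br_F8[symmetric] br_def)
      finally show ?thesis .
    next
      case False
      then show ?thesis by (simp add: F_def B1_def brC_def)
    qed
  qed
  have FH: "F (H v) = v" if "v \<in> vecs 8" for v
  proof (rule ext)
    fix k show "F (H v) k = v k"
    proof (cases "k < 8")
      case True
      have "F (H v) k = (\<Sum>i<8. g k i * (\<Sum>l<8. h i l * v l))"
        using True by (simp add: F_def) (rule sum.cong[OF refl], simp add: H_def)
      also have "\<dots> = v k" using gh True by (intro sum_inv) auto
      finally show ?thesis .
    next
      case False then show ?thesis using that by (simp add: F_def vecs_def)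
    qed
  qed
  have HF: "H (F v) = v" if "v \<in> vecs 8" for v
  proof (rule ext)
    fix k show "H (F v) k = v k"
    proof (cases "k < 8")
      case True
      have "H (F v) k = (\<Sum>i<8. h k i * (\<Sum>l<8. g i l * v l))"
        using True by (simp add: H_def) (rule sum.cong[OF refl], simp add: F_def)
      also have "\<dots> = v k" using hg True by (intro sum_inv) auto
      finally show ?thesis .
    next
      case False then show ?thesis using that by (simp add: H_def vecs_def)
    qed
  qed
  have Finj: "v = w" if "v \<in> vecs 8" "w \<in> vecs 8" "F v = F w" for v w
    using HF that by metis
  have Fvecs: "F v \<in> vecs 8" for v by (simp add: F_def vecs_def)
  have Hvecs: "H v \<in> vecs 8" for v by (simp add: H_def vecs_def)
  have Fadd: "F (\<lambda>k. v k + w k) = (\<lambda>k. F v k + F w k)" for v w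
    by (rule ext) (simp add: F_def sum.distrib distrib_left)
  have Fsm: "F (\<lambda>k. s * v k) = (\<lambda>k. s * F v k)" for s v
    by (rule ext) (simp add: F_def sum_distrib_left mult_ac)
  have F0: "F (\<lambda>k. 0) = (\<lambda>k. 0)" by (rule ext) (simp add: F_def)
  define x where "x = H (e 0)"
  define y where "y = H (e 1)"
  have Fx: "F x = e 0" unfolding x_def by (rule FH) (simp add: e_vecs)
  have Fy: "F y = e 1" unfolding y_def by (rule FH) (simp add: e_vecs)
  define u1 where "u1 = B0 x y"
  define u2 where "u2 = B0 x u1"
  define u3 where "u3 = B0 x u2"
  define u4 where "u4 = B0 x u3"
  define u5 where "u5 = B0 x u4"
  define u6 where "u6 = B0 x u5"
  have Fu1: "F u1 = e 2" unfolding u1_def Fhom Fx Fy B1_def by (simp add: brC_e0 numeral_2_eq_2)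
  have Fu2: "F u2 = e 3" unfolding u2_def Fhom Fx Fu1 B1_def by (simp add: brC_e0)
  have Fu3: "F u3 = e 4" unfolding u3_def Fhom Fx Fu2 B1_def by (simp add: brC_e0)
  have Fu4: "F u4 = e 5" unfolding u4_def Fhom Fx Fu3 B1_def by (simp add: brC_e0)
  have Fu5: "F u5 = e 6" unfolding u5_def Fhom Fx Fu4 B1_def by (simp add: brC_e0)
  have Fu6: "F u6 = e 7" unfolding u6_def Fhom Fx Fu5 B1_def by (simp add: brC_e0)
  have l1: "u1 \<in> lowv 2" unfolding u1_def B0_def by (rule brC_low2)
  have l2: "u2 \<in> lowv 3" unfolding u2_def B0_def using brC_low[OF l1] by simp
  have l3: "u3 \<in> lowv 4" unfolding u3_def B0_def using brC_low[OF l2] by simp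
  have l4: "u4 \<in> lowv 5" unfolding u4_def B0_def using brC_low[OF l3] by simp
  have l5: "u5 \<in> lowv 6" unfolding u5_def B0_def using brC_low[OF l4] by simp
  have l6: "u6 \<in> lowv 7" unfolding u6_def B0_def using brC_low[OF l5] by simp
  define w where "w = x 0 * y 1 - x 1 * y 0"
  have c1: "u1 2 = w" unfolding u1_def B0_def w_def by (rule coord2)
  have c2: "u2 3 = x 0 * w" unfolding u2_def B0_def using br_step[OF l1, where x=x] c1 by simp
  have c3: "u3 4 = x 0 ^ 2 * w" unfolding u3_def B0_def using br_step[OF l2, where x=x] c2
    by (simp add: power2_eq_square)
  have c4: "u4 5 = x 0 ^ 3 * w" unfolding u4_def B0_def using br_step[OF l3, where x=x] c3
    by (simp add: power3_eq_cube power2_eq_square mult_ac)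
  have c5: "u5 6 = x 0 ^ 4 * w" unfolding u5_def B0_def using br_step[OF l4, where x=x] c4
    by (simp add: eval_nat_numeral mult_ac)
  have c6: "u6 7 = x 0 ^ 5 * w" unfolding u6_def B0_def using br_step[OF l5, where x=x] c5
    by (simp add: eval_nat_numeral mult_ac)
  have "u6 \<noteq> (\<lambda>k. 0)"
  proof
    assume "u6 = (\<lambda>k. 0)"
    then have "e 7 = (\<lambda>k. 0::'a)" using Fu6 F0 by simp
    then show False by (metis e_def zero_neq_one)
  qed
  then obtain k where k: "u6 k \<noteq> 0" by auto
  have "k = 7"
  proof (rule ccontr)
    assume "k \<noteq> 7"
    then have "k < 7 \<or> 8 \<le> k" by auto
    then show False using k lowvD[OF l6, of k] lowv_vecs[OF l6] by (auto simp: vecs_def)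
  qed
  then have "x 0 ^ 5 * w \<noteq> 0" using k c6 by simp
  then have w0: "w \<noteq> 0" by auto
  define L where "L = (\<lambda>k. (c2 + 2 * c4) * u3 k + ((c5 + c6) * u4 k + (c7 * u5 k + c8 * u6 k)))"
  have "F L = B1 (e 1) (e 2)"
    unfolding L_def Fadd Fsm Fu3 Fu4 Fu5 Fu6 B1_def by (rule B1_12[symmetric])
  also have "\<dots> = F (B0 y u1)" using Fhom Fy Fu1 by simp
  finally have FL: "F L = F (B0 y u1)" .
  have Lv: "L \<in> vecs 8"
    using lowv_vecs[OF l3] lowv_vecs[OF l4] lowv_vecs[OF l5] lowv_vecs[OF l6]
    unfolding L_def vecs_def by simp
  have Bv: "B0 y u1 \<in> vecs 8" unfolding B0_def using br_vecs[of b2 b4 b5 b6 b7 b8 y u1] by (simp add: br_F8)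
  have "B0 y u1 = L" using Finj[OF Bv Lv] FL by simp
  then have "B0 y u1 3 = L 3" by simp
  moreover have "L 3 = 0" unfolding L_def
    using lowvD[OF l3, of 3] lowvD[OF l4, of 3] lowvD[OF l5, of 3] lowvD[OF l6, of 3] by simp
  moreover have "B0 y u1 3 = y 0 * w"
    unfolding B0_def coord3 c1 using lowvD[OF l1, of 0] by simp
  ultimately have "y 0 * w = 0" by simp
  then have y0: "y 0 = 0" using w0 by simp
  define \<sigma> where "\<sigma> = y 1 * u4 5"
  have E1: "B0 y u4 = (\<lambda>k. (b2 * \<sigma>) * e 7 k)"
    unfolding B0_def \<sigma>_def by (rule E1shape[where y=y, OF y0 l4])
  have "B0 u1 u3 = (\<lambda>k. b4 * (u1 2 * u3 4) * e 7 k)"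
    unfolding B0_def by (rule E2shape[OF l1 l3])
  moreover have "u1 2 * u3 4 = \<sigma>"
    unfolding \<sigma>_def c1 c3 c4 w_def y0 by (simp add: power2_eq_square power3_eq_cube mult_ac)
  ultimately have E2: "B0 u1 u3 = (\<lambda>k. (b4 * \<sigma>) * e 7 k)" by simp
  have "(\<lambda>k. c2 * e 7 k) = F (B0 y u4)" unfolding Fhom Fy Fu4 B1_def by (rule B1_15[symmetric])
  also have "\<dots> = (\<lambda>k. (b2 * \<sigma>) * F (e 7) k)" unfolding E1 Fsm ..
  finally have "c2 * e 7 7 = b2 * \<sigma> * F (e 7) 7" by metis
  then have r1: "c2 = b2 * \<sigma> * F (e 7) 7" by (simp add: e_def)
  have "(\<lambda>k. c4 * e 7 k) = F (B0 u1 u3)" unfolding Fhom Fu1 Fu3 B1_def by (rule B1_24[symmetric])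
  also have "\<dots> = (\<lambda>k. (b4 * \<sigma>) * F (e 7) k)" unfolding E2 Fsm ..
  finally have "c4 * e 7 7 = b4 * \<sigma> * F (e 7) 7" by metis
  then have r2: "c4 = b4 * \<sigma> * F (e 7) 7" by (simp add: e_def)
  have "p * c2 = q * c4" unfolding r1 r2 using pq(1)
    by (metis mult.assoc)
  then show False using pq(2) by simp
qed

lemma poly_F8:
  fixes P2 P4 P5 P6 P7 P8 :: "'a::comm_ring_1 poly"
  shows "poly (F8 0 P2 P4 P5 P6 P7 P8 i j k) t = F8 0 (poly P2 t) (poly P4 t) (poly P5 t) (poly P6 t) (poly P7 t) (poly P8 t) i j k"
  unfolding F8_def F8_up_def by (simp split: if_split)

lemma id_orbit:
  fixes C :: "'a::comm_ring_1 sc"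
  assumes "in_ambient 8 C"
  shows "C \<in> gl_orbit 8 C"
proof -
  define g :: "nat \<Rightarrow> nat \<Rightarrow> 'a" where "g = (\<lambda>a b. if a = b then 1 else 0)"
  have inv: "invertible_mat 8 g"
    unfolding invertible_mat_def g_def by (rule exI[of _ "\<lambda>a b. if a = b then 1 else 0"]) (simp add: all8 sum8)
  have "(\<Sum>c<8. C i j c * g k c) = (\<Sum>a<8. \<Sum>b<8. g a i * g b j * C a b k)"
    if "i < 8" "j < 8" "k < 8" for i j k
  proof -
    have r1: "\<And>(x::'a) P. (if P then 1 else 0) * x = (if P then x else 0)" by simp
    have r2: "\<And>(x::'a) P. x * (if P then 1 else 0) = (if P then x else 0)" by simp
    have r3: "\<And>(x::'a) y P. (if P then x else 0) * y = (if P then x * y else 0)" by simp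
    show ?thesis using that by (simp add: g_def r1 r2 r3 sum.delta sum.delta' cong: if_cong)
  qed
  then show ?thesis unfolding gl_orbit_def using assms inv by blast
qed

lemma Fil_sub_Nil: "Fil_var n \<subseteq> Nil_var n"
  unfolding Fil_var_def Nil_var_def nilpotent_br_def filiform_br_def by blast

lemma Nil_sub_Lie: "Nil_var n \<subseteq> Lie_var n"
  unfolding Lie_var_def Nil_var_def by blast


lemma nonrigid_gen:
  fixes a2 a4 a5 a6 a7 a8 p q u v :: "'a::field_char_0"
  assumes pq: "p * a2 = q * a4" and uv: "p * u \<noteq> q * v" and S: "Fil_var 8 \<subseteq> S"
  shows "\<not> rigid_in 8 S (F8 0 a2 a4 a5 a6 a7 a8)"
proof -
  let ?C0 = "F8 0 a2 a4 a5 a6 a7 a8"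
  define \<Gamma> where "\<Gamma> t = F8 0 (a2 + t * u) (a4 + t * v) a5 a6 a7 a8" for t
  define Q where "Q i j k = F8 0 [:a2, u:] [:a4, v:] [:a5:] [:a6:] [:a7:] [:a8:] i j k" for i j k
  have cv: "\<forall>t i j k. \<Gamma> t i j k = poly (Q i j k) t"
    by (simp add: \<Gamma>_def Q_def poly_F8)
  have inS: "\<forall>t. \<Gamma> t \<in> S"
  proof
    fix t show "\<Gamma> t \<in> S" unfolding \<Gamma>_def using fil_F8[of "a2 + t * u" "a4 + t * v" a5 a6 a7 a8] S by blast
  qed
  have at0: "\<Gamma> 0 = ?C0" by (simp add: \<Gamma>_def)
  have amb: "in_ambient 8 ?C0" using is_lie_F8[of a2 a4 a5 a6 a7 a8] by (simp add: is_lie_def)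
  have C0O: "?C0 \<in> gl_orbit 8 ?C0" by (rule id_orbit[OF amb])
  have out: "\<forall>t. t \<noteq> 0 \<longrightarrow> \<Gamma> t \<notin> gl_orbit 8 ?C0"
  proof (intro allI impI)
    fix t :: 'a assume t: "t \<noteq> 0"
    have "p * (a2 + t * u) - q * (a4 + t * v) = t * (p * u - q * v)" using pq by (simp add: algebra_simps)
    moreover have "t * (p * u - q * v) \<noteq> 0" using t uv by simp
    ultimately have "p * (a2 + t * u) \<noteq> q * (a4 + t * v)" by auto
    then show "\<Gamma> t \<notin> gl_orbit 8 ?C0" unfolding \<Gamma>_def by (rule noniso[OF pq])
  qed
  show ?thesis unfolding rigid_in_def by (rule not_open_curve[OF cv inS at0 C0O out])
qed

lemma nonrigid_F8:
  fixes a2 a4 a5 a6 a7 a8 :: "'a::field_char_0"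
  assumes S: "Fil_var 8 \<subseteq> S"
  shows "\<not> rigid_in 8 S (F8 0 a2 a4 a5 a6 a7 a8)"
proof (cases "a4 = 0")
  case True
  show ?thesis by (rule nonrigid_gen[of 0 a2 1 a4 0 1, OF _ _ S]) (simp_all add: True)
next
  case False
  show ?thesis by (rule nonrigid_gen[of a4 a2 a2 a4 1 0, OF _ _ S]) (simp_all add: False mult.commute)
qed

theorem proposition12:
  fixes a2 a4 a5 a6 a7 a8 :: "'a::field_char_0"
  assumes "alg_closed TYPE('a)"
    and "is_lie 8 (F8 0 a2 a4 a5 a6 a7 a8)"
  shows "\<not> rigid_in 8 (Fil_var 8) (F8 0 a2 a4 a5 a6 a7 a8)
       \<and> \<not> rigid_in 8 (Nil_var 8) (F8 0 a2 a4 a5 a6 a7 a8)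
       \<and> \<not> rigid_in 8 (Lie_var 8) (F8 0 a2 a4 a5 a6 a7 a8)"
  using nonrigid_F8[of "Fil_var 8"] nonrigid_F8[of "Nil_var 8"] nonrigid_F8[of "Lie_var 8"]
    Fil_sub_Nil[of 8] Nil_sub_Lie[of 8] by blast

end
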